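(* Let $G$ be a connected graph of order $n\geq 9$ with minimum degree $\delta(G)\geq\frac{n-2}{2}$. Then $prc(G)=\chi'(G)$.
   Context: A path in an edge-coloured graph is a rainbow path if its edges receive pairwise distinct colours. The proper rainbow connection number $prc(G)$ of a connected graph is the minimum number of colours in a proper edge-colouring (adjacent edges get distinct colours) such that every two distinct vertices are joined by a rainbow path. $\chi'(G)$ is the chromatic index. *)

theory Defs
  imports Main
begin

definition simple_graph :: "'a set \<Rightarrow> 'a set set \<Rightarrow> bool" where
  "simple_graph V E \<longleftrightarrow> finite V \<and> (\<forall>e\<in>E. e \<subseteq> V \<and> card e = 2)"

definition degree :: "'a set \<Rightarrow> 'a set set \<Rightarrow> 'a \<Rightarrow> nat" where
  "degree V E v = card {u\<in>V. {u, v} \<in> E}"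

definition is_path :: "'a set \<Rightarrow> 'a set set \<Rightarrow> 'a list \<Rightarrow> bool" where
  "is_path V E xs \<longleftrightarrow> xs \<noteq> [] \<and> set xs \<subseteq> V \<and> distinct xs \<and>
     (\<forall>i. Suc i < length xs \<longrightarrow> {xs ! i, xs ! Suc i} \<in> E)"

definition path_edges :: "'a list \<Rightarrow> 'a set list" where
  "path_edges xs = map (\<lambda>i. {xs ! i, xs ! Suc i}) [0..<length xs - 1]"

definition connected_graph :: "'a set \<Rightarrow> 'a set set \<Rightarrow> bool" where
  "connected_graph V E \<longleftrightarrow> V \<noteq> {} \<and>
     (\<forall>u\<in>V. \<forall>v\<in>V. \<exists>xs. is_path V E xs \<and> hd xs = u \<and> last xs = v)"

definition proper_edge_colouring :: "'a set set \<Rightarrow> ('a set \<Rightarrow> nat) \<Rightarrow> bool" where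
  "proper_edge_colouring E c \<longleftrightarrow>
     (\<forall>e\<in>E. \<forall>f\<in>E. e \<noteq> f \<and> e \<inter> f \<noteq> {} \<longrightarrow> c e \<noteq> c f)"

definition rainbow_path :: "'a set \<Rightarrow> 'a set set \<Rightarrow> ('a set \<Rightarrow> nat) \<Rightarrow> 'a list \<Rightarrow> bool" where
  "rainbow_path V E c xs \<longleftrightarrow> is_path V E xs \<and> distinct (map c (path_edges xs))"

definition rainbow_connected :: "'a set \<Rightarrow> 'a set set \<Rightarrow> ('a set \<Rightarrow> nat) \<Rightarrow> bool" where
  "rainbow_connected V E c \<longleftrightarrow>
     (\<forall>u\<in>V. \<forall>v\<in>V. u \<noteq> v \<longrightarrow> (\<exists>xs. rainbow_path V E c xs \<and> hd xs = u \<and> last xs = v))"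

definition chromatic_index :: "'a set set \<Rightarrow> nat" where
  "chromatic_index E = (LEAST k. \<exists>c. proper_edge_colouring E c \<and> c ` E \<subseteq> {..<k})"

definition prc :: "'a set \<Rightarrow> 'a set set \<Rightarrow> nat" where
  "prc V E = (LEAST k. \<exists>c. proper_edge_colouring E c \<and> c ` E \<subseteq> {..<k} \<and> rainbow_connected V E c)"

end

theory Submission
  imports Defs
begin

lemma no_loop: "simple_graph V E \<Longrightarrow> {x,x} \<notin> E"
  unfolding simple_graph_def by force

lemma edge_in: "simple_graph V E \<Longrightarrow> {x,y} \<in> E \<Longrightarrow> x \<in> V \<and> y \<in> V"
  unfolding simple_graph_def by blast

lemma propD: "proper_edge_colouring E c \<Longrightarrow> e \<in> E \<Longrightarrow> f \<in> E \<Longrightarrow> e \<noteq> f \<Longrightarrow> x \<in> e \<Longrightarrow> x \<in> f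
  \<Longrightarrow> c e \<noteq> c f"
  unfolding proper_edge_colouring_def by blast

lemma rp2:
  assumes "{u,v} \<in> E" "u \<in> V" "v \<in> V" "u \<noteq> v"
  shows "rainbow_path V E c [u,v]"
  using assms by (auto simp: rainbow_path_def is_path_def path_edges_def less_Suc_eq)

lemma rp3:
  assumes "{u,w} \<in> E" "{w,v} \<in> E" "u \<in> V" "v \<in> V" "w \<in> V" "u \<noteq> v" "u \<noteq> w" "w \<noteq> v"
    "proper_edge_colouring E c"
  shows "rainbow_path V E c [u,w,v]"
proof -
  have "c {u,w} \<noteq> c {w,v}"
    by (rule propD[OF assms(9,1,2), of w]) (use assms in \<open>auto simp: doubleton_eq_iff\<close>)
  then show ?thesis
    using assms by (auto simp: rainbow_path_def is_path_def path_edges_def less_Suc_eq nth_Cons split: nat.splits)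
qed

lemma rp4:
  assumes "{u,a} \<in> E" "{a,b} \<in> E" "{b,v} \<in> E" "u \<in> V" "v \<in> V" "a \<in> V" "b \<in> V"
    "distinct [u,a,b,v]" "c {u,a} \<noteq> c {b,v}"
    "proper_edge_colouring E c"
  shows "rainbow_path V E c [u,a,b,v]"
proof -
  have "c {u,a} \<noteq> c {a,b}"
    by (rule propD[OF assms(10,1,2), of a]) (use assms in \<open>auto simp: doubleton_eq_iff\<close>)
  moreover have "c {a,b} \<noteq> c {b,v}"
    by (rule propD[OF assms(10,2,3), of b]) (use assms in \<open>auto simp: doubleton_eq_iff\<close>)
  ultimately show ?thesis
    using assms by (auto simp: rainbow_path_def is_path_def path_edges_def less_Suc_eq nth_Cons split: nat.splits)
qed

lemma rp5:
  assumes "{u,w} \<in> E" "{w,a} \<in> E" "{a,b} \<in> E" "{b,v} \<in> E" "u \<in> V" "v \<in> V" "a \<in> V" "b \<in> V" "w \<in> V"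
    "distinct [u,w,a,b,v]" "c {u,a} = c {b,v}" "c {u,w} \<noteq> c {a,b}" "{u,a} \<in> E"
    "proper_edge_colouring E c"
  shows "rainbow_path V E c [u,w,a,b,v]"
proof -
  have 1: "c {u,w} \<noteq> c {w,a}"
    by (rule propD[OF assms(14,1,2), of w]) (use assms in \<open>auto simp: doubleton_eq_iff\<close>)
  have 2: "c {u,w} \<noteq> c {u,a}"
    by (rule propD[OF assms(14,1,13), of u]) (use assms in \<open>auto simp: doubleton_eq_iff\<close>)
  have 3: "c {w,a} \<noteq> c {a,b}"
    by (rule propD[OF assms(14,2,3), of a]) (use assms in \<open>auto simp: doubleton_eq_iff\<close>)
  have 4: "c {w,a} \<noteq> c {u,a}"
    by (rule propD[OF assms(14,2,13), of a]) (use assms in \<open>auto simp: doubleton_eq_iff\<close>)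
  have 5: "c {a,b} \<noteq> c {b,v}"
    by (rule propD[OF assms(14,3,4), of b]) (use assms in \<open>auto simp: doubleton_eq_iff\<close>)
  show ?thesis
    using assms 1 2 3 4 5 by (auto simp: rainbow_path_def is_path_def path_edges_def less_Suc_eq nth_Cons split: nat.splits)
qed

lemma cross_idx: "xs \<noteq> [] \<Longrightarrow> hd xs \<in> S \<Longrightarrow> last xs \<notin> S \<Longrightarrow>
  \<exists>i. Suc i < length xs \<and> xs ! i \<in> S \<and> xs ! Suc i \<notin> S"
proof (induction xs)
  case Nil then show ?case by simp
next
  case (Cons x xs)
  show ?case
  proof (cases xs)
    case Nil then show ?thesis using Cons by simp
  next
    case (Cons y ys)
    show ?thesis
    proof (cases "y \<in> S")
      case True
      then obtain i where "Suc i < length xs" "xs ! i \<in> S" "xs ! Suc i \<notin> S"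
        using Cons.IH Cons.prems Cons by auto
      then show ?thesis by (intro exI[of _ "Suc i"]) auto
    next
      case False
      then show ?thesis using Cons.prems Cons by (intro exI[of _ 0]) auto
    qed
  qed
qed

lemma main_rc:
  fixes V :: "'a set" and E :: "'a set set"
  assumes sg: "simple_graph V E"
    and cg: "connected_graph V E"
    and n9: "card V \<ge> 9"
    and dg: "\<forall>v\<in>V. 2 * degree V E v + 2 \<ge> card V"
    and pc: "proper_edge_colouring E c"
  shows "rainbow_connected V E c"
  unfolding rainbow_connected_def
proof (intro ballI impI)
  fix u v assume uV: "u \<in> V" and vV: "v \<in> V" and uv: "u \<noteq> v"
  have finV: "finite V" using sg simple_graph_def by blast
  have sym: "\<And>x y. {x,y} \<in> E \<Longrightarrow> {y,x} \<in> E" by (simp add: insert_commute)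
  have nl: "\<And>x. {x,x} \<notin> E" using no_loop[OF sg] .
  show "\<exists>xs. rainbow_path V E c xs \<and> hd xs = u \<and> last xs = v"
  proof (cases "{u,v} \<in> E")
    case True
    then show ?thesis using rp2[OF True uV vV uv, of c] by force
  next
    case nuv: False
    show ?thesis
    proof (cases "\<exists>w\<in>V. {u,w} \<in> E \<and> {w,v} \<in> E")
      case True
      then obtain w where w: "w \<in> V" "{u,w} \<in> E" "{w,v} \<in> E" by blast
      have "u \<noteq> w" "w \<noteq> v" using w nl by auto
      then show ?thesis using rp3[OF w(2,3) uV vV w(1) uv _ _ pc] by force
    next
      case nw: False
      define X where "X = {x\<in>V. {x,u} \<in> E}"
      define Y where "Y = {y\<in>V. {y,v} \<in> E}"
      have XY: "X \<inter> Y = {}" using nw unfolding X_def Y_def by (auto simp: insert_commute)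
      have uX: "u \<notin> X" "v \<notin> X" "u \<notin> Y" "v \<notin> Y"
        using nl nuv unfolding X_def Y_def by (auto simp: insert_commute)
      have sub: "X \<union> Y \<subseteq> V - {u,v}" using uX unfolding X_def Y_def by auto
      have fX: "finite X" "finite Y" using finV unfolding X_def Y_def by auto
      have cX: "card X = degree V E u" "card Y = degree V E v"
        unfolding X_def Y_def degree_def by auto
      have cu: "card (X \<union> Y) = card X + card Y" using card_Un_disjoint[OF fX XY] .
      have cs: "card (X \<union> Y) \<le> card V - 2"
        using card_mono[OF _ sub] finV uV vV uv by auto
      have d1: "2 * card X + 2 \<ge> card V" "2 * card Y + 2 \<ge> card V"
        using dg uV vV cX by auto
      have eqX: "2 * card X + 2 = card V" using cu cs d1 n9 by linarith
      have k4: "card X \<ge> 4" using eqX n9 by linarith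
      have XYeq: "X \<union> Y = V - {u,v}"
        using card_subset_eq[OF _ sub] finV cu cs d1 uV vV uv by auto
      obtain xs where xs: "is_path V E xs" "hd xs = u" "last xs = v"
        using cg uV vV unfolding connected_graph_def by blast
      obtain i where i: "Suc i < length xs" "xs ! i \<in> insert u X" "xs ! Suc i \<notin> insert u X"
        using cross_idx[of xs "insert u X"] xs uX uv unfolding is_path_def by auto
      define a where "a = xs ! i"
      define b where "b = xs ! Suc i"
      have ab: "{a,b} \<in> E" using xs(1) i(1) unfolding is_path_def a_def b_def by blast
      have aV: "a \<in> V" and bV: "b \<in> V" using edge_in[OF sg ab] by auto
      have aX: "a \<in> X"
      proof (rule ccontr)
        assume "a \<notin> X"
        then have "a = u" using i(2) a_def by auto
        then have "b \<in> X" using ab bV unfolding X_def by (auto simp: insert_commute)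
        then show False using i(3) b_def by auto
      qed
      have bY: "b \<in> Y"
      proof -
        have "b \<notin> X" "b \<noteq> u" using i(3) b_def by auto
        moreover have "b \<noteq> v"
        proof
          assume "b = v"
          then have "a \<in> Y" using ab aV unfolding Y_def by auto
          then show False using aX XY by auto
        qed
        ultimately show ?thesis using XYeq bV by auto
      qed
      have ua: "{u,a} \<in> E" using aX unfolding X_def by (auto simp: insert_commute)
      have bv: "{b,v} \<in> E" using bY unfolding Y_def by auto
      have dist4: "distinct [u,a,b,v]" using aX bY uX XY uv by auto
      show ?thesis
      proof (cases "c {u,a} = c {b,v}")
        case False
        then show ?thesis using rp4[OF ua ab bv uV vV aV bV dist4 False pc] by force
      next
        case cuv: True
        show ?thesis
        proof (cases "\<exists>b'\<in>Y. b' \<noteq> b \<and> {a,b'} \<in> E")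
          case True
          then obtain b' where b': "b' \<in> Y" "b' \<noteq> b" "{a,b'} \<in> E" by blast
          have b'v: "{b',v} \<in> E" using b' unfolding Y_def by auto
          have b'V: "b' \<in> V" using b' unfolding Y_def by auto
          have "c {b',v} \<noteq> c {b,v}"
            by (rule propD[OF pc b'v bv, of v]) (use b' in \<open>auto simp: doubleton_eq_iff\<close>)
          then have ne: "c {u,a} \<noteq> c {b',v}" using cuv by simp
          have "distinct [u,a,b',v]" using aX b'(1) uX XY uv by auto
          then show ?thesis using rp4[OF ua b'(3) b'v uV vV aV b'V _ ne pc] by force
        next
          case nb: False
          define N where "N = {y\<in>V. {y,a} \<in> E}"
          have cN: "card N \<ge> card X" using dg aV eqX unfolding N_def degree_def by fastforce
          have Nsub: "N \<subseteq> {u,b} \<union> (N \<inter> X)"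
          proof
            fix y assume y: "y \<in> N"
            then have yV: "y \<in> V" and ya: "{a,y} \<in> E" unfolding N_def by (auto simp: insert_commute)
            have "y \<noteq> v"
            proof
              assume "y = v" then have "a \<in> Y" using ya aV unfolding Y_def by auto
              then show False using aX XY by auto
            qed
            moreover have "y \<in> Y \<Longrightarrow> y = b" using nb ya by auto
            ultimately show "y \<in> {u,b} \<union> (N \<inter> X)" using XYeq yV y by auto
          qed
          have fN: "finite N" using finV unfolding N_def by auto
          have "card N \<le> card {u,b} + card (N \<inter> X)"
            using card_mono[OF _ Nsub] card_Un_le[of "{u,b}" "N \<inter> X"] fN by auto
          moreover have "card {u,b} \<le> 2" by (simp add: card_insert_le_m1)
          ultimately have cW: "card (N \<inter> X) \<ge> 2" using cN k4 by linarith
          then obtain w1 where w1: "w1 \<in> N \<inter> X"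
            by (metis all_not_in_conv card.empty not_numeral_le_zero)
          have "card (N \<inter> X - {w1}) \<ge> 1" using cW w1 fN by auto
          then obtain w2 where w2: "w2 \<in> N \<inter> X" "w2 \<noteq> w1"
            by (metis Diff_iff card.empty all_not_in_conv insert_iff not_one_le_zero)
          have uw: "\<And>w. w \<in> X \<Longrightarrow> {u,w} \<in> E" unfolding X_def by (auto simp: insert_commute)
          have "c {u,w1} \<noteq> c {u,w2}"
            by (rule propD[OF pc uw uw, of _ _ u]) (use w1 w2 in \<open>auto simp: doubleton_eq_iff\<close>)
          then obtain w where w: "w \<in> N \<inter> X" "c {u,w} \<noteq> c {a,b}"
            using w1 w2 by metis
          have wa: "{w,a} \<in> E" using w unfolding N_def by auto
          have wV: "w \<in> V" using w unfolding N_def by auto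
          have "w \<noteq> a" using wa nl by auto
          then have d5: "distinct [u,w,a,b,v]" using aX bY uX XY uv w by auto
          show ?thesis using rp5[OF uw[OF _] wa ab bv uV vV aV bV wV d5 cuv w(2) ua pc] w by force
        qed
      qed
    qed
  qed
qed

theorem proposition5p10:
  fixes V :: "'a set" and E :: "'a set set"
  assumes "simple_graph V E"
    and "connected_graph V E"
    and "card V \<ge> 9"
    and "\<forall>v\<in>V. 2 * degree V E v + 2 \<ge> card V"
  shows "prc V E = chromatic_index E"
proof -
  have finE: "finite E"
  proof -
    have "E \<subseteq> Pow V" using assms(1) unfolding simple_graph_def by auto
    moreover have "finite V" using assms(1) unfolding simple_graph_def by auto
    ultimately show ?thesis using finite_subset by blast
  qed
  obtain f :: "'a set \<Rightarrow> nat" where f: "bij_betw f E {..<card E}"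
    using ex_bij_betw_finite_nat[OF finE] lessThan_atLeast0 by metis
  have "proper_edge_colouring E f \<and> f ` E \<subseteq> {..<card E}"
    using f unfolding proper_edge_colouring_def bij_betw_def inj_on_def by auto
  then have ex: "\<exists>c. proper_edge_colouring E c \<and> c ` E \<subseteq> {..<card E}" by blast
  obtain c where c: "proper_edge_colouring E c" "c ` E \<subseteq> {..<chromatic_index E}"
  proof -
    have "\<exists>k c. proper_edge_colouring E c \<and> c ` E \<subseteq> {..<k}" using ex by blast
    from LeastI_ex[OF this] show ?thesis using that unfolding chromatic_index_def by blast
  qed
  have rc: "rainbow_connected V E c" using main_rc[OF assms c(1)] .
  have le1: "prc V E \<le> chromatic_index E"
    unfolding prc_def by (rule Least_le) (use c rc in blast)
  obtain c' where c': "proper_edge_colouring E c'" "c' ` E \<subseteq> {..<prc V E}"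
    using LeastI[of "\<lambda>k. \<exists>c. proper_edge_colouring E c \<and> c ` E \<subseteq> {..<k} \<and> rainbow_connected V E c"
      "chromatic_index E"] c rc unfolding prc_def by blast
  have le2: "chromatic_index E \<le> prc V E"
    unfolding chromatic_index_def by (rule Least_le) (use c' in blast)
  show ?thesis using le1 le2 by simp
qed

end
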